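(* Let $F$ be a field, $U,V$ finite-dimensional $F$-vector spaces with $\dim U=n$ and $\dim V=m$, $A:U\times U\to V$ an alternating bilinear map whose image spans $V$, $u_1<\dots<u_n$ an ordered basis of $U$, and $\mathcal{B}$, $\mathcal{W}(\mathcal{B})$ as in the context. If $\mathcal{B}$ is not a tree of height one, then \[|\mathcal{W}(\mathcal{B})|\ge\left(\sum_{i=2}^{m+1}(n-i)\right)+(m-2),\] and in particular $\dim\operatorname{Im}\Psi\ge\left(\sum_{i=2}^{m+1}(n-i)\right)+(m-2)$.
   Context: $\mathcal{Y}$ is the set of $2$-element subsets of $\{1,\dots,n\}$, totally ordered by $\{i,j\}<\{r,s\}$ iff $\max\{i,j\}<\max\{r,s\}$, or the maxima are equal to $a$ and the remaining element of $\{i,j\}\setminus\{a\}$ is smaller than that of $\{r,s\}\setminus\{a\}$. $\mathcal{B}$ is constructed as follows: $\mathcal{B}_0=B_0=\emptyset$; inductively let $\{i,j\}$ ($i<j$) be the least element of $\mathcal{Y}$ with $A(u_i,u_j)\notin\operatorname{span}(B_k)$, and set $\mathcal{B}_{k+1}=\mathcal{B}_k\cup\{\{i,j\}\}$, $B_{k+1}=B_k\cup\{A(u_i,u_j)\}$; stop at $k=m$ and put $\mathcal{B}=\mathcal{B}_m$. $\mathcal{B}$ is a tree of height one if there is an $i$ with $i\in\{j,l\}$ for every $\{j,l\}\in\mathcal{B}$. $\mathcal{W}(\mathcal{B})$ is the set of $3$-element subsets of $\{1,\dots,n\}$ containing some $2$-element subset belonging to $\mathcal{B}$. $\Psi:U\otimes_F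 U\otimes_F U\to V\otimes_F U$ is the linear map with $\Psi(x\otimes y\otimes z)=A(x,y)\otimes z+A(y,z)\otimes x+A(z,x)\otimes y$. *)

theory Defs
  imports Main "HOL.Vector_Spaces" "HOL-Library.Function_Algebras"
begin

definition alt_bilinear ::
  "('a::field \<Rightarrow> 'u::ab_group_add \<Rightarrow> 'u) \<Rightarrow> ('a \<Rightarrow> 'v::ab_group_add \<Rightarrow> 'v) \<Rightarrow> ('u \<Rightarrow> 'u \<Rightarrow> 'v) \<Rightarrow> bool" where
  "alt_bilinear sU sV A \<longleftrightarrow>
     (\<forall>x. Vector_Spaces.linear sU sV (A x)) \<and>
     (\<forall>y. Vector_Spaces.linear sU sV (\<lambda>x. A x y)) \<and>
     (\<forall>x. A x x = 0)"

definition Yset :: "nat \<Rightarrow> nat set set" where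
  "Yset n = {S. S \<subseteq> {1..n} \<and> card S = 2}"

definition Ylt :: "nat set \<Rightarrow> nat set \<Rightarrow> bool" where
  "Ylt S T \<longleftrightarrow> Max S < Max T \<or> (Max S = Max T \<and> Min S < Min T)"

definition pairvec :: "('u \<Rightarrow> 'u \<Rightarrow> 'v) \<Rightarrow> (nat \<Rightarrow> 'u) \<Rightarrow> nat set \<Rightarrow> 'v" where
  "pairvec A u S = A (u (Min S)) (u (Max S))"

fun Bseq :: "('a::field \<Rightarrow> 'v::ab_group_add \<Rightarrow> 'v) \<Rightarrow> ('u \<Rightarrow> 'u \<Rightarrow> 'v) \<Rightarrow> (nat \<Rightarrow> 'u) \<Rightarrow> nat
              \<Rightarrow> nat \<Rightarrow> nat set set" where
  "Bseq sV A u n 0 = {}"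
| "Bseq sV A u n (Suc k) =
     (let C = {S \<in> Yset n. pairvec A u S \<notin> module.span sV (pairvec A u ` Bseq sV A u n k)}
      in if C = {} then Bseq sV A u n k
         else insert (THE S. S \<in> C \<and> (\<forall>T\<in>C. T \<noteq> S \<longrightarrow> Ylt S T)) (Bseq sV A u n k))"

definition Bset :: "('a::field \<Rightarrow> 'v::ab_group_add \<Rightarrow> 'v) \<Rightarrow> ('u \<Rightarrow> 'u \<Rightarrow> 'v) \<Rightarrow> (nat \<Rightarrow> 'u) \<Rightarrow> nat \<Rightarrow> nat set set" where
  "Bset sV A u n = Bseq sV A u n (vector_space.dim sV (UNIV :: 'v set))"

definition tree_height_one :: "nat set set \<Rightarrow> bool" where
  "tree_height_one B \<longleftrightarrow> (\<exists>i. \<forall>S\<in>B. i \<in> S)"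

definition Wset :: "nat \<Rightarrow> nat set set \<Rightarrow> nat set set" where
  "Wset n B = {T. T \<subseteq> {1..n} \<and> card T = 3 \<and> (\<exists>S\<in>B. S \<subseteq> T)}"

text \<open>Coordinate model of V \<otimes> U: an element \<Sum>_k v_k \<otimes> u_k is the function k \<mapsto> v_k
  (supported in {1..n}); scalar multiplication is pointwise.\<close>
definition tscale :: "('a \<Rightarrow> 'v \<Rightarrow> 'v) \<Rightarrow> 'a \<Rightarrow> (nat \<Rightarrow> 'v) \<Rightarrow> (nat \<Rightarrow> 'v)" where
  "tscale sV c f = (\<lambda>k. sV c (f k))"

text \<open>\<Psi>(u_a \<otimes> u_b \<otimes> u_c) = A(u_a,u_b) \<otimes> u_c + A(u_b,u_c) \<otimes> u_a + A(u_c,u_a) \<otimes> u_b, in coordinates.\<close>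
definition Psi_basis :: "('u \<Rightarrow> 'u \<Rightarrow> 'v::ab_group_add) \<Rightarrow> (nat \<Rightarrow> 'u) \<Rightarrow> nat \<Rightarrow> nat \<Rightarrow> nat \<Rightarrow> (nat \<Rightarrow> 'v)" where
  "Psi_basis A u a b c = (\<lambda>k. (if k = c then A (u a) (u b) else 0)
                             + (if k = a then A (u b) (u c) else 0)
                             + (if k = b then A (u c) (u a) else 0))"

text \<open>Im \<Psi> is spanned by the images of the basis tensors u_a \<otimes> u_b \<otimes> u_c.\<close>
definition Im_Psi :: "('a::field \<Rightarrow> 'v::ab_group_add \<Rightarrow> 'v) \<Rightarrow> ('u \<Rightarrow> 'u \<Rightarrow> 'v) \<Rightarrow> (nat \<Rightarrow> 'u) \<Rightarrow> nat \<Rightarrow> (nat \<Rightarrow> 'v) set" where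
  "Im_Psi sV A u n = module.span (tscale sV) {Psi_basis A u a b c | a b c. a \<in> {1..n} \<and> b \<in> {1..n} \<and> c \<in> {1..n}}"

end

theory Submission
  imports Defs
begin


lemma two_set: "card (S::nat set) = 2 \<Longrightarrow> \<exists>p q. p < q \<and> S = {p,q}"
proof -
  assume "card S = 2"
  then obtain p q where "p \<noteq> q" "S = {p,q}" by (auto simp: card_2_iff)
  then show ?thesis
  proof (cases "p < q")
    case True then show ?thesis using \<open>S = {p,q}\<close> by blast
  next
    case False then have "q < p" using \<open>p \<noteq> q\<close> by simp
    then show ?thesis using \<open>S = {p,q}\<close> by (metis insert_commute)
  qed
qed

lemma Yset_elem: "S \<in> Yset n \<Longrightarrow> \<exists>p q. p < q \<and> S = {p,q} \<and> 1 \<le> p \<and> q \<le> n"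
  unfolding Yset_def using two_set by fastforce

definition good :: "nat set \<Rightarrow> nat set set \<Rightarrow> bool" where
  "good g E \<longleftrightarrow> (\<exists>e\<in>E. e \<inter> g = {}) \<or> (\<exists>x. \<exists>a\<in>g. \<exists>b\<in>g. a \<noteq> b \<and> {a,x} \<in> E \<and> {b,x} \<in> E)"

lemma good_mono: "good g E \<Longrightarrow> E \<subseteq> E' \<Longrightarrow> good g E'"
  unfolding good_def by blast

lemma finite_Wset: "finite (Wset n E)"
  by (rule finite_subset[of _ "Pow {1..n}"]) (auto simp: Wset_def)

lemma Wset_mono: "E \<subseteq> E' \<Longrightarrow> Wset n E \<subseteq> Wset n E'"
  unfolding Wset_def by blast

lemma step_lemma:
  assumes E: "E \<subseteq> Yset n" "finite E" and g: "g \<in> Yset n" "g \<notin> E"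
  shows "int (card (Wset n (insert g E))) \<ge> int (card (Wset n E)) + int n - 2 - int (card E)
           + (if good g E then 1 else 0)"
proof -
  have gsub: "g \<subseteq> {1..n}" and cg: "card g = 2" using g by (auto simp: Yset_def)
  have fg: "finite g" using cg by (metis card.infinite zero_neq_numeral)
  define Bl where "Bl = {x\<in>{1..n}-g. \<exists>e\<in>E. e \<subseteq> insert x g}"
  define New where "New = (\<lambda>x. insert x g) ` ({1..n} - g - Bl)"
  have New_sub: "New \<subseteq> Wset n (insert g E)"
    using gsub cg fg by (auto simp: New_def Wset_def)
  have disj: "New \<inter> Wset n E = {}"
    by (auto simp: New_def Wset_def Bl_def)
  have WW: "Wset n E \<subseteq> Wset n (insert g E)" by (rule Wset_mono) blast
  have inj: "inj_on (\<lambda>x. insert x g) ({1..n} - g - Bl)"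
  proof (rule inj_onI)
    fix x y assume "x \<in> {1..n} - g - Bl" "y \<in> {1..n} - g - Bl" "insert x g = insert y g"
    then have "x \<in> insert y g" by blast
    then show "x = y" using \<open>x \<in> {1..n} - g - Bl\<close> by blast
  qed
  have cN: "card New = card ({1..n} - g - Bl)"
    unfolding New_def using inj by (rule card_image)
  have Blsub: "Bl \<subseteq> {1..n} - g" by (auto simp: Bl_def)
  have c1: "card ({1..n} - g) = n - 2" using gsub cg by (simp add: card_Diff_subset fg)
  have c2: "card ({1..n} - g - Bl) = card ({1..n} - g) - card Bl"
    using Blsub by (simp add: card_Diff_subset finite_subset)
  have cBl: "card Bl \<le> n - 2" unfolding c1[symmetric] using Blsub by (intro card_mono) auto
  define adj where "adj = {e\<in>E. e \<inter> g \<noteq> {}}"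
  define phi where "phi = (\<lambda>e::nat set. Max (e - g))"
  have Blphi: "Bl \<subseteq> phi ` adj"
  proof
    fix x assume "x \<in> Bl"
    then obtain e where x: "x \<in> {1..n}" "x \<notin> g" and e: "e \<in> E" "e \<subseteq> insert x g"
      by (auto simp: Bl_def)
    obtain p q where pq: "p < q" "e = {p,q}" using e E Yset_elem by blast
    have "e \<noteq> g" using e g by auto
    have "x \<in> e"
    proof (rule ccontr)
      assume "x \<notin> e"
      then have "e \<subseteq> g" using e by blast
      moreover have "card e = card g" using pq cg by simp
      ultimately have "e = g" using fg card_subset_eq by blast
      then show False using \<open>e \<noteq> g\<close> by simp
    qed
    have "e - g = {x}"
    proof -
      have "e - g \<subseteq> {x}" using e by auto
      moreover have "x \<in> e - g" using \<open>x \<in> e\<close> x by auto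
      ultimately show ?thesis by blast
    qed
    moreover have "e \<inter> g \<noteq> {}"
    proof
      assume "e \<inter> g = {}"
      then have "e \<subseteq> {x}" using e by auto
      then show False using pq by auto
    qed
    ultimately show "x \<in> phi ` adj" using e by (auto simp: adj_def phi_def intro!: image_eqI[of _ _ e])
  qed
  have fadj: "finite adj" using E by (auto simp: adj_def)
  have cadjE: "card adj \<le> card E" using E by (auto simp: adj_def intro!: card_mono)
  have key: "card Bl + (if good g E then 1 else 0) \<le> card E"
  proof (cases "good g E")
    case False
    have "card Bl \<le> card (phi ` adj)" using Blphi fadj by (simp add: card_mono)
    also have "\<dots> \<le> card adj" using fadj by (rule card_image_le)
    finally show ?thesis using False cadjE by simp
  next
    case True
    from True[unfolded good_def] show ?thesis
    proof (elim disjE exE bexE conjE)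
      fix e assume "e \<in> E" "e \<inter> g = {}"
      then have "adj \<subseteq> E - {e}" by (auto simp: adj_def)
      then have "card adj \<le> card E - 1"
      proof -
        have "card adj \<le> card (E - {e})" using \<open>adj \<subseteq> E - {e}\<close> E by (intro card_mono) auto
        then show ?thesis using E \<open>e \<in> E\<close> by simp
      qed
      moreover have "card Bl \<le> card adj"
        using Blphi fadj card_image_le[OF fadj, of phi] card_mono[OF finite_imageI[OF fadj], of Bl phi] by linarith
      moreover have "card E \<ge> 1" using E \<open>e \<in> E\<close> card_gt_0_iff[of E] by auto
      ultimately show ?thesis using True by simp
    next
      fix x a b assume ab: "a \<in> g" "b \<in> g" "a \<noteq> b" "{a, x} \<in> E" "{b, x} \<in> E"
      have xa: "x \<noteq> a" using ab E by (auto simp: Yset_def)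
      have xb: "x \<noteq> b" using ab E by (auto simp: Yset_def)
      have xg: "x \<notin> g"
      proof
        assume "x \<in> g"
        then have "{a,x} \<subseteq> g" using ab by blast
        moreover have "card {a,x} = card g" using xa cg by simp
        ultimately have "g = {a,x}" using fg card_subset_eq by metis
        then show False using ab g by auto
      qed
      have in1: "{a,x} \<in> adj" "{b,x} \<in> adj" using ab by (auto simp: adj_def)
      have d1: "{a,x} - g = {x}" "{b,x} - g = {x}" using ab xg by auto
      then have p1: "phi {a,x} = x" "phi {b,x} = x" by (simp_all add: phi_def)
      have ne: "{a,x} \<noteq> {b,x}" using ab xa xb by (auto simp: doubleton_eq_iff)
      have "\<not> inj_on phi adj"
      proof
        assume "inj_on phi adj"
        from inj_onD[OF this _ in1] p1 have "{a,x} = {b,x}" by simp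
        with ne show False by simp
      qed
      then have "card (phi ` adj) < card adj"
        using fadj card_image_le inj_on_iff_eq_card le_neq_implies_less by blast
      moreover have "card Bl \<le> card (phi ` adj)" using Blphi fadj by (simp add: card_mono)
      ultimately show ?thesis using True cadjE by simp
    qed
  qed
  have "card (Wset n E \<union> New) = card (Wset n E) + card New"
    using disj finite_Wset[of n E] finite_subset[OF New_sub finite_Wset]
    by (simp add: card_Un_disjoint inf_commute)
  moreover have "card (Wset n E \<union> New) \<le> card (Wset n (insert g E))"
    using New_sub WW finite_Wset by (intro card_mono) auto
  ultimately have "card (Wset n E) + card New \<le> card (Wset n (insert g E))" by simp
  moreover have "card New = n - 2 - card Bl" using cN c1 c2 by simp
  ultimately show ?thesis using key cBl by (cases "good g E") auto
qed

definition sb :: "nat \<Rightarrow> nat \<Rightarrow> int" where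
  "sb n k = (\<Sum>i=2..k+1. int n - int i)"

lemma sb_0: "sb n 0 = 0" by (simp add: sb_def)

lemma sb_Suc: "sb n (Suc k) = sb n k + int n - int k - 2"
proof -
  have "{2..Suc k + 1} = insert (Suc (k+1)) {2..k+1}" by auto
  then show ?thesis by (simp add: sb_def)
qed

definition FF :: "nat \<Rightarrow> nat set set \<Rightarrow> int" where
  "FF n E = int (card (Wset n E)) - sb n (card E)"

lemma FF_step:
  assumes "E \<subseteq> Yset n" "finite E" "g \<in> Yset n" "g \<notin> E"
  shows "FF n (insert g E) \<ge> FF n E + (if good g E then 1 else 0)"
  using step_lemma[OF assms] assms by (simp add: FF_def sb_Suc)

lemma FF_acc:
  assumes "finite R" "E \<subseteq> Yset n" "finite E" "R \<subseteq> Yset n" "R \<inter> E = {}"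
  shows "FF n (E \<union> R) \<ge> FF n E + int (card {g\<in>R. good g E})"
  using assms
proof (induction R rule: finite_induct)
  case empty then show ?case by simp
next
  case (insert g R)
  have IH: "FF n (E \<union> R) \<ge> FF n E + int (card {g\<in>R. good g E})"
    using insert by auto
  have st: "FF n (insert g (E \<union> R)) \<ge> FF n (E \<union> R) + (if good g (E \<union> R) then 1 else 0)"
    using insert by (intro FF_step) auto
  have gm: "good g E \<Longrightarrow> good g (E \<union> R)" using good_mono by blast
  have fin: "finite {g\<in>R. good g E}" using insert by auto
  have "card {h\<in>insert g R. good h E} = card {h\<in>R. good h E} + (if good g E then 1 else 0)"
  proof (cases "good g E")
    case True
    then have "{h\<in>insert g R. good h E} = insert g {h\<in>R. good h E}" by auto
    then show ?thesis using True fin insert by simp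
  next
    case False
    then have "{h\<in>insert g R. good h E} = {h\<in>R. good h E}" by auto
    then show ?thesis using False by simp
  qed
  then show ?case using IH st gm by (cases "good g E"; cases "good g (E \<union> R)") auto
qed

lemma FF_empty: "FF n {} = 0"
  by (simp add: FF_def sb_0 Wset_def)

lemma FF_ins0:
  assumes "E \<subseteq> Yset n" "finite E" "g \<in> Yset n" "g \<notin> E"
  shows "FF n (insert g E) \<ge> FF n E"
  using FF_step[OF assms] by (cases "good g E") auto

lemma FF_insgood:
  assumes "E \<subseteq> Yset n" "finite E" "g \<in> Yset n" "g \<notin> E" "good g E"
  shows "FF n (insert g E) \<ge> FF n E + 1"
  using FF_step[OF assms(1-4)] assms(5) by auto

lemma FF_allgood:
  assumes "finite R" "E \<subseteq> Yset n" "finite E" "R \<subseteq> Yset n" "R \<inter> E = {}"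
    and "\<And>g. g \<in> R \<Longrightarrow> good g E"
  shows "FF n (E \<union> R) \<ge> FF n E + int (card R)"
proof -
  have "{g\<in>R. good g E} = R" using assms(6) by auto
  then show ?thesis using FF_acc[OF assms(1-5)] by simp
qed


lemma pair_eq: "card (S::nat set) = 2 \<Longrightarrow> a \<in> S \<Longrightarrow> b \<in> S \<Longrightarrow> a \<noteq> b \<Longrightarrow> S = {a,b}"
proof -
  assume h: "card S = 2" "a \<in> S" "b \<in> S" "a \<noteq> b"
  have fS: "finite S" using h(1) by (metis card.infinite zero_neq_numeral)
  have "{a,b} \<subseteq> S" using h by blast
  moreover have "card {a,b} = card S" using h by simp
  ultimately show ?thesis using fS card_subset_eq by metis
qed

lemma Yset_card: "S \<in> Yset n \<Longrightarrow> card S = 2" by (simp add: Yset_def)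

lemma cross_good:
  assumes Y: "e \<in> Yset n" "f \<in> Yset n" "x \<in> Yset n" "y \<in> Yset n"
    and ef: "e \<inter> f = {}"
    and x: "x \<inter> e \<noteq> {}" "x \<inter> f \<noteq> {}" and y: "y \<inter> e \<noteq> {}" "y \<inter> f \<noteq> {}"
    and xy: "x \<noteq> y" and E': "e \<in> E'" "f \<in> E'" "y \<in> E'"
  shows "good x E'"
proof -
  obtain p q where pq: "p \<in> e" "q \<in> f" "p \<in> x" "q \<in> x" using x by blast
  have "p \<noteq> q" using pq ef by blast
  then have xe: "x = {p,q}" using pair_eq[OF Yset_card[OF Y(3)]] pq by blast
  obtain r s where rs: "r \<in> e" "s \<in> f" "r \<in> y" "s \<in> y" using y by blast
  have "r \<noteq> s" using rs ef by blast
  then have ye: "y = {r,s}" using pair_eq[OF Yset_card[OF Y(4)]] rs by blast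
  show ?thesis
  proof (cases "x \<inter> y = {}")
    case True then show ?thesis using E' unfolding good_def by (metis inf_commute)
  next
    case False
    then have "p = r \<or> q = s" using xe ye pq rs ef by blast
    then show ?thesis
    proof
      assume "p = r"
      then have "q \<noteq> s" using xy xe ye by auto
      then have "f = {q,s}" using pair_eq[OF Yset_card[OF Y(2)]] pq rs by blast
      then have "{p,s} \<in> E'" "{q,s} \<in> E'" using E' ye \<open>p = r\<close> by auto
      moreover have "p \<in> x" "q \<in> x" "p \<noteq> q" using pq \<open>p \<noteq> q\<close> by auto
      ultimately show ?thesis unfolding good_def by blast
    next
      assume "q = s"
      then have "p \<noteq> r" using xy xe ye by auto
      then have "e = {p,r}" using pair_eq[OF Yset_card[OF Y(1)]] pq rs by blast
      then have "{q,r} \<in> E'" "{p,r} \<in> E'" using E' ye \<open>q = s\<close> by (auto simp: insert_commute)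
      moreover have "p \<in> x" "q \<in> x" "q \<noteq> p" using pq \<open>p \<noteq> q\<close> by auto
      ultimately show ?thesis unfolding good_def by blast
    qed
  qed
qed

lemma comb_main:
  assumes E: "E \<subseteq> Yset n" "finite E" and ns: "\<not> (\<exists>i. \<forall>S\<in>E. i \<in> S)"
  shows "FF n E \<ge> int (card E) - 2"
proof (cases "\<exists>e\<in>E. \<exists>f\<in>E. e \<inter> f = {}")
  case True
  then obtain e f where ef: "e \<in> E" "f \<in> E" "e \<inter> f = {}" by blast
  have eY: "e \<in> Yset n" and fY: "f \<in> Yset n" using ef E by auto
  have "e \<noteq> f" using ef Yset_card[OF eY] by auto
  define X where "X = {g\<in>E-{e,f}. g \<inter> e \<noteq> {} \<and> g \<inter> f \<noteq> {}}"
  define R where "R = E - {e,f} - X"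
  define E0 where "E0 = insert f {e}"
  have F1: "FF n {e} \<ge> 0" using FF_ins0[of "{}" n e] eY FF_empty by simp
  have F2: "FF n E0 \<ge> 1"
  proof -
    have "good f {e}" unfolding good_def using ef by blast
    then show ?thesis using FF_insgood[of "{e}" n f] eY fY \<open>e \<noteq> f\<close> F1 by (simp add: E0_def)
  qed
  have finR: "finite R" using E by (simp add: R_def)
  have E0Y: "E0 \<subseteq> Yset n" using eY fY by (simp add: E0_def)
  have F3: "FF n (E0 \<union> R) \<ge> FF n E0 + int (card R)"
  proof (rule FF_allgood[OF finR E0Y])
    show "finite E0" by (simp add: E0_def)
    show "R \<subseteq> Yset n" using E by (auto simp: R_def)
    show "R \<inter> E0 = {}" by (auto simp: R_def E0_def)
    fix g assume "g \<in> R"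
    then have "g \<inter> e = {} \<or> g \<inter> f = {}" by (auto simp: R_def X_def)
    then show "good g E0" unfolding good_def E0_def by (metis inf_commute insertCI)
  qed
  have cR: "card (E0 \<union> R) = 2 + card R"
    using finR \<open>e \<noteq> f\<close> by (simp add: E0_def R_def card_insert_if)
  show ?thesis
  proof (cases "X = {}")
    case True
    then have "E = E0 \<union> R" using ef by (auto simp: R_def E0_def)
    then show ?thesis using F2 F3 cR by simp
  next
    case False
    then obtain x1 where x1: "x1 \<in> X" by blast
    define E1 where "E1 = insert x1 (E0 \<union> R)"
    have x1Y: "x1 \<in> Yset n" using x1 E by (auto simp: X_def)
    have x1n: "x1 \<notin> E0 \<union> R" using x1 by (auto simp: X_def R_def E0_def)
    have F4: "FF n E1 \<ge> FF n (E0 \<union> R)"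
      unfolding E1_def
      using FF_ins0[of "E0 \<union> R" n x1] E0Y finR x1Y x1n E by (auto simp: R_def E0_def)
    define X' where "X' = X - {x1}"
    have finX': "finite X'" using E by (simp add: X'_def X_def)
    have E1Y: "E1 \<subseteq> Yset n" using E0Y x1Y E by (auto simp: E1_def R_def)
    have F5: "FF n (E1 \<union> X') \<ge> FF n E1 + int (card X')"
    proof (rule FF_allgood[OF finX' E1Y])
      show "finite E1" using finR by (simp add: E1_def E0_def)
      show "X' \<subseteq> Yset n" using E by (auto simp: X'_def X_def)
      show "X' \<inter> E1 = {}" by (auto simp: X'_def X_def E1_def R_def E0_def)
      fix g assume g: "g \<in> X'"
      show "good g E1"
      proof (rule cross_good[OF eY fY _ x1Y ef(3)])
        show "g \<in> Yset n" using g E by (auto simp: X'_def X_def)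
        show "g \<inter> e \<noteq> {}" "g \<inter> f \<noteq> {}" using g by (auto simp: X'_def X_def)
        show "x1 \<inter> e \<noteq> {}" "x1 \<inter> f \<noteq> {}" using x1 by (auto simp: X_def)
        show "g \<noteq> x1" using g by (auto simp: X'_def)
        show "e \<in> E1" "f \<in> E1" "x1 \<in> E1" by (auto simp: E1_def E0_def)
      qed
    qed
    have EE: "E = E1 \<union> X'" using ef x1 by (auto simp: E1_def E0_def R_def X'_def X_def)
    have "card (E1 \<union> X') = card E1 + card X'"
      using finX' finR by (intro card_Un_disjoint) (auto simp: E1_def E0_def X'_def X_def R_def)
    moreover have "card E1 = Suc (card (E0 \<union> R))" using x1n finR by (simp add: E1_def E0_def)
    ultimately have "card E = 3 + card R + card X'" using EE cR by simp
    then show ?thesis using EE F2 F3 F4 F5 by simp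
  qed
next
  case False
  have "E \<noteq> {}" using ns by blast
  then obtain e where e: "e \<in> E" by blast
  obtain a b where ab: "a < b" "e = {a,b}" using Yset_elem e E by blast
  obtain f1 where f1: "f1 \<in> E" "a \<notin> f1" using ns by blast
  obtain f2 where f2: "f2 \<in> E" "b \<notin> f2" using ns by blast
  have "f1 \<inter> e \<noteq> {}" using False f1 e by blast
  then have bf1: "b \<in> f1" using f1 ab by auto
  obtain c where c: "c \<in> f1" "c \<noteq> b"
    using Yset_card[of f1 n] f1 E by (metis card_2_iff insert_iff singleton_iff subsetD)
  have f1e: "f1 = {b,c}" using pair_eq[OF Yset_card[of f1 n] bf1 c(1)] c f1 E by auto
  have ca: "c \<noteq> a" using c f1 by auto
  have "f2 \<inter> e \<noteq> {}" using False f2 e by blast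
  then have af2: "a \<in> f2" using f2 ab by auto
  have "f2 \<inter> f1 \<noteq> {}" using False f2 f1 by blast
  then have "c \<in> f2" using f1e f2 by auto
  have f2e: "f2 = {a,c}" using pair_eq[OF Yset_card[of f2 n] af2 \<open>c \<in> f2\<close>] ca f2 E by auto
  define T where "T = insert f2 (insert f1 {e})"
  have eY: "e \<in> Yset n" "f1 \<in> Yset n" "f2 \<in> Yset n" using e f1 f2 E by auto
  have ne1: "f1 \<noteq> e" using f1 ab by auto
  have ne2: "f2 \<notin> insert f1 {e}" using f2 ab bf1 by auto
  have F1: "FF n {e} \<ge> 0" using FF_ins0[of "{}" n e] eY FF_empty by simp
  have F2: "FF n (insert f1 {e}) \<ge> 0" using FF_ins0[of "{e}" n f1] eY ne1 F1 by simp
  have "good f2 (insert f1 {e})"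
  proof -
    have "{a,b} \<in> insert f1 {e}" "{c,b} \<in> insert f1 {e}" using ab f1e by (auto simp: insert_commute)
    moreover have "a \<in> f2" "c \<in> f2" "a \<noteq> c" using f2e ca by auto
    ultimately show ?thesis unfolding good_def by blast
  qed
  then have F3: "FF n T \<ge> 1" using FF_insgood[of "insert f1 {e}" n f2] eY ne2 F2 by (simp add: T_def)
  have "E \<subseteq> T"
  proof
    fix g assume g: "g \<in> E"
    have cg: "card g = 2" using g E Yset_card by blast
    have h1: "g \<inter> e \<noteq> {}" "g \<inter> f1 \<noteq> {}" "g \<inter> f2 \<noteq> {}" using False g e f1 f2 by blast+
    show "g \<in> T"
    proof (cases "a \<in> g")
      case True
      show ?thesis
      proof (cases "b \<in> g")
        case True
        then have "g = e" using pair_eq[OF cg \<open>a \<in> g\<close> True] ab by auto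
        then show ?thesis by (simp add: T_def)
      next
        case False
        then have "c \<in> g" using h1(2) f1e by auto
        then have "g = f2" using pair_eq[OF cg \<open>a \<in> g\<close> \<open>c \<in> g\<close>] ca f2e by auto
        then show ?thesis by (simp add: T_def)
      qed
    next
      case False
      then have "b \<in> g" "c \<in> g" using h1(1,3) ab f2e by auto
      then have "g = f1" using pair_eq[OF cg] c f1e by auto
      then show ?thesis by (simp add: T_def)
    qed
  qed
  moreover have "T \<subseteq> E" using e f1 f2 by (simp add: T_def)
  ultimately have "E = T" by blast
  moreover have "card T = 3" using ne1 ne2 by (simp add: T_def)
  ultimately show ?thesis using F3 by simp
qed



declare Bseq.simps(2)[simp del]

definition wt :: "nat set \<Rightarrow> nat" where "wt X = (\<Sum>x\<in>X. (2::nat)^x)"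

lemma Yset_MinMax:
  assumes "P \<in> Yset n"
  shows "P = {Min P, Max P}" "Min P < Max P" "1 \<le> Min P" "Max P \<le> n"
proof -
  obtain p q where pq: "p < q" "P = {p,q}" "1 \<le> p" "q \<le> n" using Yset_elem[OF assms] by blast
  have "Min P = p" "Max P = q" using pq by auto
  then show "P = {Min P, Max P}" "Min P < Max P" "1 \<le> Min P" "Max P \<le> n" using pq by auto
qed

lemma pow_sum_lt: "a < b \<Longrightarrow> b < d \<Longrightarrow> (2::nat)^a + 2^b < 2^d"
proof -
  assume h: "a < b" "b < d"
  have "(2::nat)^a < 2^b" using h by simp
  then have "(2::nat)^a + 2^b < 2^Suc b" by simp
  also have "\<dots> \<le> 2^d" using h by (intro power_increasing) auto
  finally show ?thesis .
qed

lemma wt_pair: "a < b \<Longrightarrow> wt {a,b} = 2^a + 2^b" by (simp add: wt_def)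

lemma Ylt_wt:
  assumes "P \<in> Yset n" "Q \<in> Yset n"
  shows "Ylt P Q \<longleftrightarrow> wt P < wt Q"
proof -
  obtain a b where ab: "a < b" "P = {a,b}" using Yset_elem[OF assms(1)] by blast
  obtain c d where cd: "c < d" "Q = {c,d}" using Yset_elem[OF assms(2)] by blast
  have m: "Min P = a" "Max P = b" "Min Q = c" "Max Q = d" using ab cd by auto
  have wP: "wt P = 2^a + 2^b" and wQ: "wt Q = 2^c + 2^d" using ab cd wt_pair by auto
  have fw: "b < d \<or> (b = d \<and> a < c) \<Longrightarrow> wt P < wt Q"
  proof -
    assume "b < d \<or> (b = d \<and> a < c)"
    then show ?thesis
    proof
      assume "b < d" then have "(2::nat)^a + 2^b < 2^d" using pow_sum_lt ab by blast
      then show ?thesis using wP wQ by simp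
    next
      assume "b = d \<and> a < c" then show ?thesis using wP wQ by simp
    qed
  qed
  have bw: "d < b \<or> (d = b \<and> c \<le> a) \<Longrightarrow> wt Q \<le> wt P"
  proof -
    assume "d < b \<or> (d = b \<and> c \<le> a)"
    then show ?thesis
    proof
      assume "d < b" then have "(2::nat)^c + 2^d < 2^b" using pow_sum_lt cd by blast
      then show ?thesis using wP wQ by simp
    next
      assume "d = b \<and> c \<le> a" then show ?thesis using wP wQ by (simp add: power_increasing)
    qed
  qed
  show ?thesis unfolding Ylt_def m using fw bw by (meson leI less_le_not_le nat_neq_iff)
qed

lemma Ylt_total:
  assumes "P \<in> Yset n" "Q \<in> Yset n" "P \<noteq> Q"
  shows "Ylt P Q \<or> Ylt Q P"
proof -
  have "Max P \<noteq> Max Q \<or> Min P \<noteq> Min Q"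
    using Yset_MinMax(1)[OF assms(1)] Yset_MinMax(1)[OF assms(2)] assms(3) by metis
  then show ?thesis unfolding Ylt_def by auto
qed

lemma Ylt_asym: "P \<in> Yset n \<Longrightarrow> Q \<in> Yset n \<Longrightarrow> Ylt P Q \<Longrightarrow> \<not> Ylt Q P"
  using Ylt_wt by fastforce

lemma Ylt_irrefl: "\<not> Ylt P P" by (simp add: Ylt_def)

lemma Ylt_trans: "P \<in> Yset n \<Longrightarrow> Q \<in> Yset n \<Longrightarrow> R \<in> Yset n \<Longrightarrow> Ylt P Q \<Longrightarrow> Ylt Q R \<Longrightarrow> Ylt P R"
  using Ylt_wt by (metis less_trans)

lemma finite_Yset: "finite (Yset n)"
  by (rule finite_subset[of _ "Pow {1..n}"]) (auto simp: Yset_def)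

lemma the_min:
  assumes C: "C \<subseteq> Yset n" "C \<noteq> {}"
  defines "N \<equiv> THE S. S \<in> C \<and> (\<forall>T\<in>C. T \<noteq> S \<longrightarrow> Ylt S T)"
  shows "N \<in> C \<and> (\<forall>T\<in>C. T \<noteq> N \<longrightarrow> Ylt N T)"
proof -
  obtain x where x: "x \<in> C" using C by blast
  obtain N0 where N0: "N0 \<in> C" "\<forall>y. y \<in> C \<longrightarrow> wt N0 \<le> wt y"
    using ex_has_least_nat[of "\<lambda>S. S \<in> C", OF x, of wt] by blast
  have P0: "N0 \<in> C \<and> (\<forall>T\<in>C. T \<noteq> N0 \<longrightarrow> Ylt N0 T)"
  proof (intro conjI ballI impI)
    show "N0 \<in> C" by fact
    fix T assume "T \<in> C" "T \<noteq> N0"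
    then have "Ylt N0 T \<or> Ylt T N0" using Ylt_total[of N0 n T] N0 C by auto
    moreover have "\<not> Ylt T N0"
    proof
      assume "Ylt T N0"
      then have "wt T < wt N0" using Ylt_wt[of T n N0] N0 \<open>T \<in> C\<close> C by blast
      moreover have "wt N0 \<le> wt T" using N0(2) \<open>T \<in> C\<close> by blast
      ultimately show False by linarith
    qed
    ultimately show "Ylt N0 T" by blast
  qed
  have uniq: "S = N0" if "S \<in> C \<and> (\<forall>T\<in>C. T \<noteq> S \<longrightarrow> Ylt S T)" for S
  proof (rule ccontr)
    assume "S \<noteq> N0"
    then have "Ylt S N0" "Ylt N0 S" using that P0 by auto
    then show False using Ylt_asym[of S n N0] that N0 C by auto
  qed
  have "N = N0" unfolding N_def using P0 uniq by (rule the_equality)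
  then show ?thesis using P0 by simp
qed

locale gr = vector_space sV for sV :: "'a::field \<Rightarrow> 'v::ab_group_add \<Rightarrow> 'v" +
  fixes A :: "'u \<Rightarrow> 'u \<Rightarrow> 'v" and u :: "nat \<Rightarrow> 'u" and n :: nat
begin

abbreviation "pv \<equiv> pairvec A u"
abbreviation "Bs \<equiv> Bseq sV A u n"

definition Cset where "Cset k = {S \<in> Yset n. pv S \<notin> span (pv ` Bs k)}"

lemma Bs_empty: "Cset k = {} \<Longrightarrow> Bs (Suc k) = Bs k"
proof -
  assume ne: "Cset k = {}"
  have "Bs (Suc k) = (let C = Cset k in if C = {} then Bs k else insert (THE S. S \<in> C \<and> (\<forall>T\<in>C. T \<noteq> S \<longrightarrow> Ylt S T)) (Bs k))"
    unfolding Cset_def by (rule Bseq.simps(2))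
  then show ?thesis using ne by (simp add: Let_def)
qed

lemma Bs_ins: "Cset k \<noteq> {} \<Longrightarrow> \<exists>N. N \<in> Cset k \<and> (\<forall>T\<in>Cset k. T \<noteq> N \<longrightarrow> Ylt N T) \<and> Bs (Suc k) = insert N (Bs k)"
proof -
  assume ne: "Cset k \<noteq> {}"
  have sub: "Cset k \<subseteq> Yset n" by (auto simp: Cset_def)
  have "Bs (Suc k) = (let C = Cset k in if C = {} then Bs k else insert (THE S. S \<in> C \<and> (\<forall>T\<in>C. T \<noteq> S \<longrightarrow> Ylt S T)) (Bs k))"
    unfolding Cset_def by (rule Bseq.simps(2))
  then have eq: "Bs (Suc k) = insert (THE S. S \<in> Cset k \<and> (\<forall>T\<in>Cset k. T \<noteq> S \<longrightarrow> Ylt S T)) (Bs k)"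
    using ne by (simp only: Let_def if_False)
  from the_min[OF sub ne] eq show ?thesis by blast
qed

lemma Bs_inv:
  "Bs k \<subseteq> Yset n \<and> independent (pv ` Bs k) \<and> inj_on pv (Bs k) \<and> card (Bs k) \<le> k
   \<and> (card (Bs k) = k \<or> (\<forall>P\<in>Yset n. pv P \<in> span (pv ` Bs k)))
   \<and> (\<forall>P\<in>Yset n. P \<notin> Bs k \<longrightarrow> (\<exists>S\<in>Bs k. Ylt P S) \<longrightarrow> pv P \<in> span (pv ` {S\<in>Bs k. Ylt S P}))"
proof (induction k)
  case 0
  then show ?case by (simp add: independent_empty)
next
  case (Suc k)
  show ?case
  proof (cases "Cset k = {}")
    case True
    then have sp: "\<forall>P\<in>Yset n. pv P \<in> span (pv ` Bs k)" by (auto simp: Cset_def)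
    show ?thesis using Suc.IH sp Bs_empty[OF True] by auto
  next
    case False
    then obtain N where N: "N \<in> Cset k" "\<forall>T\<in>Cset k. T \<noteq> N \<longrightarrow> Ylt N T"
      and eq: "Bs (Suc k) = insert N (Bs k)" using Bs_ins by blast
    have NY: "N \<in> Yset n" and Nsp: "pv N \<notin> span (pv ` Bs k)" using N by (auto simp: Cset_def)
    have NB: "N \<notin> Bs k" using Nsp span_base by blast
    have fin: "finite (Bs k)" using Suc.IH finite_Yset finite_subset by blast
    have NB2: "pv N \<notin> pv ` Bs k" using Nsp span_base by blast
    have c1: "Bs (Suc k) \<subseteq> Yset n" using Suc.IH NY eq by auto
    have c2: "independent (pv ` Bs (Suc k))"
      unfolding eq image_insert using Suc.IH Nsp by (intro independent_insertI) auto
    have c3: "inj_on pv (Bs (Suc k))" unfolding eq using Suc.IH NB2 NB by simp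
    have cardS: "card (Bs (Suc k)) = Suc (card (Bs k))" unfolding eq using fin NB by simp
    have c5: "card (Bs (Suc k)) = Suc k"
    proof -
      have "card (Bs k) = k"
      proof (rule ccontr)
        assume "card (Bs k) \<noteq> k"
        then have "\<forall>P\<in>Yset n. pv P \<in> span (pv ` Bs k)" using Suc.IH by blast
        then show False using N(1) by (auto simp: Cset_def)
      qed
      then show ?thesis using cardS by simp
    qed
    have c6: "pv P \<in> span (pv ` {S\<in>Bs (Suc k). Ylt S P})"
      if P: "P \<in> Yset n" "P \<notin> Bs (Suc k)" "\<exists>S\<in>Bs (Suc k). Ylt P S" for P
    proof (cases "\<exists>S\<in>Bs k. Ylt P S")
      case True
      then have "pv P \<in> span (pv ` {S\<in>Bs k. Ylt S P})" using Suc.IH P eq by auto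
      moreover have "span (pv ` {S\<in>Bs k. Ylt S P}) \<subseteq> span (pv ` {S\<in>Bs (Suc k). Ylt S P})"
        by (intro span_mono) (auto simp: eq)
      ultimately show ?thesis by blast
    next
      case False
      then have PN: "Ylt P N" using P eq by auto
      have allS: "{S\<in>Bs k. Ylt S P} = Bs k"
      proof safe
        fix S assume S: "S \<in> Bs k"
        then have "S \<noteq> P" using P eq by auto
        moreover have "S \<in> Yset n" using S Suc.IH by auto
        ultimately show "Ylt S P" using Ylt_total[of S n P] False S P by auto
      qed
      have "P \<notin> Cset k"
      proof
        assume "P \<in> Cset k"
        moreover have "P \<noteq> N" using P eq by auto
        ultimately have "Ylt N P" using N by auto
        then show False using Ylt_asym[OF NY P(1)] PN by blast
      qed
      then have "pv P \<in> span (pv ` Bs k)" using P by (auto simp: Cset_def)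
      moreover have "span (pv ` Bs k) \<subseteq> span (pv ` {S\<in>Bs (Suc k). Ylt S P})"
        using allS by (intro span_mono) (auto simp: eq)
      ultimately show ?thesis by blast
    qed
    show ?thesis using c1 c2 c3 c5 c6 by auto
  qed
qed

end



locale setting = gr sV A u n + U: vector_space sU
  for sV :: "'a::field \<Rightarrow> 'v::ab_group_add \<Rightarrow> 'v" and A :: "'u::ab_group_add \<Rightarrow> 'u \<Rightarrow> 'v"
    and u n and sU :: "'a \<Rightarrow> 'u \<Rightarrow> 'u" +
  assumes bil: "alt_bilinear sU sV A" and ubasis: "U.span (u ` {1..n}) = UNIV"
    and fdim: "\<exists>BV. finite BV \<and> span BV = UNIV"
    and Aspan: "span (range (\<lambda>(x,y). A x y)) = UNIV"
begin

lemma A_add2: "A x (y + z) = A x y + A x z"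
  and A_scale2: "A x (sU c y) = sV c (A x y)"
  and A_add1: "A (x + y) z = A x z + A y z"
  and A_scale1: "A (sU c x) z = sV c (A x z)"
  and A_alt: "A x x = 0"
  using bil unfolding alt_bilinear_def linear_iff by auto

lemma A_zero2: "A x 0 = 0"
proof -
  have "A x (0 + 0) = A x 0 + A x 0" by (rule A_add2)
  then show ?thesis by simp
qed

lemma A_zero1: "A 0 x = 0"
proof -
  have "A (0 + 0) x = A 0 x + A 0 x" by (rule A_add1)
  then show ?thesis by simp
qed

lemma A_antisym: "A x y = - A y x"
proof -
  have "A (x + y) (x + y) = 0" by (rule A_alt)
  then have "A x x + A x y + (A y x + A y y) = 0" by (simp add: A_add1 A_add2 add_ac)
  then have "A x y + A y x = 0" by (simp add: A_alt)
  then show ?thesis by (simp add: add_eq_0_iff)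
qed

lemma pv_pair: "a < b \<Longrightarrow> pv {a,b} = A (u a) (u b)"
  by (simp add: pairvec_def)

lemma basis_in: "i \<in> {1..n} \<Longrightarrow> j \<in> {1..n} \<Longrightarrow> A (u i) (u j) \<in> span (pv ` Yset n)"
proof -
  assume ij: "i \<in> {1..n}" "j \<in> {1..n}"
  consider "i = j" | "i < j" | "j < i" by linarith
  then show ?thesis
  proof cases
    case 1 then show ?thesis by (simp add: A_alt span_zero)
  next
    case 2
    then have "{i,j} \<in> Yset n" using ij by (auto simp: Yset_def)
    then show ?thesis using pv_pair[OF 2] by (metis image_eqI span_base)
  next
    case 3
    then have "{j,i} \<in> Yset n" using ij by (auto simp: Yset_def)
    then have "A (u j) (u i) \<in> span (pv ` Yset n)" using pv_pair[OF 3] by (metis image_eqI span_base)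
    then show ?thesis using A_antisym[of "u i" "u j"] by (simp add: span_neg)
  qed
qed

lemma all_in: "A x y \<in> span (pv ` Yset n)"
proof -
  have step1: "A (u i) y \<in> span (pv ` Yset n)" if i: "i \<in> {1..n}" for i y
  proof -
    have "y \<in> U.span (u ` {1..n})" using ubasis by simp
    then show ?thesis
    proof (induction rule: U.span_induct_alt)
      case base then show ?case by (simp add: A_zero2 span_zero)
    next
      case (step c x y)
      then obtain j where "j \<in> {1..n}" "x = u j" by blast
      then have "A (u i) x \<in> span (pv ` Yset n)" using basis_in i by blast
      then show ?case using step by (simp add: A_add2 A_scale2 span_add span_scale)
    qed
  qed
  have "x \<in> U.span (u ` {1..n})" using ubasis by simp
  then show ?thesis
  proof (induction arbitrary: y rule: U.span_induct_alt)
    case base then show ?case by (simp add: A_zero1 span_zero)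
  next
    case (step c x z)
    then obtain j where "j \<in> {1..n}" "x = u j" by blast
    then have "A x y \<in> span (pv ` Yset n)" using step1 by blast
    then show ?case using step by (simp add: A_add1 A_scale1 span_add span_scale)
  qed
qed

lemma pv_span: "span (pv ` Yset n) = UNIV"
proof -
  have "range (\<lambda>(x,y). A x y) \<subseteq> span (pv ` Yset n)" using all_in by auto
  then have "span (range (\<lambda>(x,y). A x y)) \<subseteq> span (pv ` Yset n)"
    by (metis span_minimal subspace_span)
  then show ?thesis using Aspan by auto
qed

abbreviation "m \<equiv> dim (UNIV :: 'v set)"
abbreviation "B \<equiv> Bs m"

lemma fin_basis: obtains B0 where "finite B0" "independent B0" "span B0 = UNIV" "card B0 = m"
proof -
  obtain BV where BV: "finite BV" "span BV = UNIV" using fdim by blast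
  obtain B0 where B0: "independent B0" "UNIV \<subseteq> span B0" "card B0 = m"
    using basis_exists[of UNIV] by blast
  have "finite B0" using independent_span_bound[OF BV(1) B0(1)] BV(2) by auto
  then show ?thesis using that B0 by auto
qed

lemma indep_card_m_span:
  assumes "independent X" "finite X" "card X = m"
  shows "span X = UNIV"
proof (rule ccontr)
  assume "span X \<noteq> UNIV"
  then obtain v where v: "v \<notin> span X" by blast
  then have vX: "v \<notin> X" using span_base by blast
  have "independent (insert v X)" using independent_insertI[OF v assms(1)] .
  moreover obtain B0 where B0: "finite B0" "independent B0" "span B0 = UNIV" "card B0 = m"
    using fin_basis by blast
  ultimately have "card (insert v X) \<le> card B0"
    using independent_span_bound[OF B0(1)] B0(3) by auto
  then show False using vX assms B0 by simp
qed

lemma B_props: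
  "B \<subseteq> Yset n" "independent (pv ` B)" "inj_on pv B" "card B = m" "span (pv ` B) = UNIV"
  "finite B"
proof -
  have inv: "Bs m \<subseteq> Yset n \<and> independent (pv ` Bs m) \<and> inj_on pv (Bs m) \<and> card (Bs m) \<le> m
   \<and> (card (Bs m) = m \<or> (\<forall>P\<in>Yset n. pv P \<in> span (pv ` Bs m)))"
    using Bs_inv[of m] by blast
  show BY: "B \<subseteq> Yset n" "independent (pv ` B)" "inj_on pv B" using inv by auto
  show fB: "finite B" using BY finite_Yset finite_subset by blast
  show cB: "card B = m"
  proof (cases "card B = m")
    case False
    then have "\<forall>P\<in>Yset n. pv P \<in> span (pv ` B)" using inv by blast
    then have "span (pv ` Yset n) \<subseteq> span (pv ` B)"
      by (metis (no_types, lifting) image_subsetI span_minimal subspace_span)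
    then have "UNIV \<subseteq> span (pv ` B)" using pv_span by simp
    then have "m \<le> card (pv ` B)" using dim_le_card[of UNIV "pv ` B"] fB by simp
    also have "\<dots> \<le> card B" using fB card_image_le by blast
    finally show ?thesis using inv by simp
  qed simp
  show "span (pv ` B) = UNIV"
    using indep_card_m_span[of "pv ` B"] BY fB cB by (simp add: card_image)
qed

lemma B_below:
  assumes "P \<in> Yset n" "P \<notin> B"
  shows "pv P \<in> span (pv ` {S\<in>B. Ylt S P})"
proof (cases "\<exists>S\<in>B. Ylt P S")
  case True
  then show ?thesis using Bs_inv[of m] assms by blast
next
  case False
  have "{S\<in>B. Ylt S P} = B"
  proof safe
    fix S assume S: "S \<in> B"
    then have "S \<noteq> P" "S \<in> Yset n" using assms B_props by auto
    then show "Ylt S P" using Ylt_total[of S n P] False S assms by auto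
  qed
  then show ?thesis using B_props by simp
qed

end



lemma tscale_vs: "vector_space sV \<Longrightarrow> vector_space (tscale sV)"
  unfolding vector_space_def tscale_def by (auto simp: fun_eq_iff)

lemma three_sorted: "card (T::nat set) = 3 \<Longrightarrow> \<exists>x y z. x < y \<and> y < z \<and> T = {x,y,z}"
proof -
  assume "card T = 3"
  then obtain x y z where T: "T = {x,y,z}" "x \<noteq> y" "y \<noteq> z" "x \<noteq> z" by (auto simp: card_3_iff)
  have "x<y \<and> y<z \<or> x<z \<and> z<y \<or> y<x \<and> x<z \<or> y<z \<and> z<x \<or> z<x \<and> x<y \<or> z<y \<and> y<x"
    using T by linarith
  then show ?thesis
  proof (elim disjE)
    assume "x<y \<and> y<z" then show ?thesis using T by blast
  next
    assume "x<z \<and> z<y" then show ?thesis using T by (metis insert_commute)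
  next
    assume "y<x \<and> x<z" then show ?thesis using T by (metis insert_commute)
  next
    assume "y<z \<and> z<x" then show ?thesis using T by (metis insert_commute)
  next
    assume "z<x \<and> x<y" then show ?thesis using T by (metis insert_commute)
  next
    assume "z<y \<and> y<x" then show ?thesis using T by (metis insert_commute)
  qed
qed

lemma tsum_apply: "(\<Sum>T\<in>Z. tscale sV (f T) (g T)) k = (\<Sum>T\<in>Z. sV (f T) (g T k))"
  by (induction Z rule: infinite_finite_induct) (auto simp: tscale_def)

context setting
begin

sublocale T: vector_space "tscale sV"
  using tscale_vs[OF vector_space_axioms] .

definition psi3 :: "nat set \<Rightarrow> nat \<Rightarrow> 'v" where
  "psi3 X = Psi_basis A u (Min X) (Min (X - {Min X, Max X})) (Max X)"

lemma psi3_eq: "x < y \<Longrightarrow> y < z \<Longrightarrow> psi3 {x,y,z} = Psi_basis A u x y z"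
proof -
  assume h: "x < y" "y < z"
  have "Min {x,y,z} = x" "Max {x,y,z} = z" using h by auto
  moreover have "{x,y,z} - {x,z} = {y}" using h by auto
  ultimately show ?thesis by (simp add: psi3_def)
qed

lemma psi3_out: "card X = 3 \<Longrightarrow> k \<notin> X \<Longrightarrow> psi3 X k = 0"
proof -
  assume "card X = 3" "k \<notin> X"
  then obtain x y z where X: "x < y" "y < z" "X = {x,y,z}" using three_sorted by blast
  then show ?thesis using \<open>k \<notin> X\<close> psi3_eq[OF X(1,2)] by (simp add: Psi_basis_def)
qed

lemma psi3_in: "card X = 3 \<Longrightarrow> k \<in> X \<Longrightarrow> \<exists>c. c \<noteq> 0 \<and> psi3 X k = sV c (pv (X - {k}))"
proof -
  assume "card X = 3" "k \<in> X"
  then obtain x y z where X: "x < y" "y < z" "X = {x,y,z}" using three_sorted by blast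
  have ps: "psi3 X = Psi_basis A u x y z" using psi3_eq[OF X(1,2)] X(3) by simp
  have "k = x \<or> k = y \<or> k = z" using \<open>k \<in> X\<close> X by auto
  then show ?thesis
  proof (elim disjE)
    assume k: "k = x"
    have "X - {k} = {y,z}" using X k by auto
    moreover have "psi3 X k = A (u y) (u z)" using ps k X by (simp add: Psi_basis_def)
    ultimately show ?thesis using pv_pair[OF X(2)] by (intro exI[of _ 1]) simp
  next
    assume k: "k = y"
    have "X - {k} = {x,z}" using X k by auto
    moreover have "psi3 X k = A (u z) (u x)" using ps k X by (simp add: Psi_basis_def)
    moreover have "A (u z) (u x) = sV (-1) (A (u x) (u z))" using A_antisym[of "u z" "u x"] by simp
    moreover have "x < z" using X by simp
    ultimately show ?thesis using pv_pair[of x z] by (intro exI[of _ "-1"]) simp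
  next
    assume k: "k = z"
    have "X - {k} = {x,y}" using X k by auto
    moreover have "psi3 X k = A (u x) (u y)" using ps k X by (simp add: Psi_basis_def)
    ultimately show ?thesis using pv_pair[OF X(1)] by (intro exI[of _ 1]) simp
  qed
qed

abbreviation "WW \<equiv> Wset n B"

lemma wt_insert: "finite P \<Longrightarrow> k \<notin> P \<Longrightarrow> wt (insert k P) = 2^k + wt P"
  by (simp add: wt_def)

lemma psi_indep:
  assumes Z: "Z \<subseteq> WW" and sum0: "(\<Sum>T\<in>Z. tscale sV (l T) (psi3 T)) = 0"
  shows "\<forall>T\<in>Z. l T = 0"
proof (rule ccontr)
  assume "\<not> (\<forall>T\<in>Z. l T = 0)"
  define NZ where "NZ = {T\<in>Z. l T \<noteq> 0}"
  have finZ: "finite Z" using Z finite_Wset finite_subset by blast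
  have NZne: "NZ \<noteq> {}" using \<open>\<not> (\<forall>T\<in>Z. l T = 0)\<close> by (auto simp: NZ_def)
  have finNZ: "finite NZ" using finZ by (simp add: NZ_def)
  define M where "M = Max (wt ` NZ)"
  have "M \<in> wt ` NZ" unfolding M_def using finNZ NZne by simp
  then obtain T0 where T0: "T0 \<in> NZ" "wt T0 = M" by blast
  have T0max: "wt T \<le> wt T0" if "T \<in> NZ" for T
    unfolding T0(2) M_def using finNZ that by simp
  have T0W: "T0 \<in> WW" using T0 Z by (auto simp: NZ_def)
  then obtain S0 where S0: "S0 \<in> B" "S0 \<subseteq> T0" and cT0: "card T0 = 3" and T0sub: "T0 \<subseteq> {1..n}"
    by (auto simp: Wset_def)
  have S0Y: "S0 \<in> Yset n" using S0 B_props by auto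
  have cS0: "card S0 = 2" using S0Y by (simp add: Yset_def)
  have finT0: "finite T0" using T0sub finite_subset by blast
  have "card (T0 - S0) = 1" using cT0 cS0 S0 finT0 finite_subset[OF S0(2) finT0] by (simp add: card_Diff_subset)
  then obtain k0 where k0: "T0 - S0 = {k0}" by (auto simp: card_Suc_eq)
  have k0T0: "k0 \<in> T0" "k0 \<notin> S0" using k0 by auto
  have T0eq: "T0 = insert k0 S0" using k0 S0 by auto
  have T0k0: "T0 - {k0} = S0" using T0eq k0T0 by auto
  define Sp where "Sp = span (pv ` {S\<in>B. Ylt S S0})"
  have finS0: "finite S0" using cS0 by (metis card.infinite zero_neq_numeral)
  have rest: "sV (l T) (psi3 T k0) \<in> Sp" if T: "T \<in> Z - {T0}" for T
  proof (cases "l T = 0 \<or> k0 \<notin> T")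
    case True
    moreover have "card T = 3" using T Z by (auto simp: Wset_def)
    ultimately show ?thesis using psi3_out by (auto simp: Sp_def span_zero)
  next
    case False
    then have lT: "l T \<noteq> 0" and kT: "k0 \<in> T" by auto
    have TNZ: "T \<in> NZ" using T lT by (auto simp: NZ_def)
    have TW: "T \<in> WW" using T Z by auto
    then have cT: "card T = 3" and Tsub: "T \<subseteq> {1..n}" by (auto simp: Wset_def)
    have finT: "finite T" using Tsub finite_subset by blast
    define P where "P = T - {k0}"
    have PY: "P \<in> Yset n" using cT Tsub kT finT by (auto simp: Yset_def P_def)
    have Teq: "T = insert k0 P" using kT by (auto simp: P_def)
    have finP: "finite P" using finT by (simp add: P_def)
    have k0P: "k0 \<notin> P" by (simp add: P_def)
    have "wt T \<le> wt T0" using T0max TNZ by blast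
    then have "wt P \<le> wt S0"
      using wt_insert[OF finP k0P] wt_insert[OF finS0 k0T0(2)] Teq T0eq by simp
    moreover have "P \<noteq> S0" using T Teq T0eq by auto
    ultimately have PS0: "Ylt P S0"
      using Ylt_total[OF PY S0Y] Ylt_wt[OF S0Y PY] by auto
    have pvP: "pv P \<in> Sp"
    proof (cases "P \<in> B")
      case True
      then show ?thesis using PS0 by (auto simp: Sp_def intro!: span_base)
    next
      case False
      have "pv P \<in> span (pv ` {S\<in>B. Ylt S P})" using B_below[OF PY False] .
      moreover have "{S\<in>B. Ylt S P} \<subseteq> {S\<in>B. Ylt S S0}"
        using Ylt_trans[OF _ PY S0Y] PS0 B_props(1) by blast
      ultimately show ?thesis unfolding Sp_def by (meson span_mono subsetD image_mono)
    qed
    obtain c where c: "psi3 T k0 = sV c (pv P)" using psi3_in[OF cT kT] P_def by blast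
    have "sV (l T * c) (pv P) \<in> Sp" using pvP unfolding Sp_def by (rule span_scale)
    then show ?thesis using c by simp
  qed
  have "(\<Sum>T\<in>Z. sV (l T) (psi3 T k0)) = 0"
    using tsum_apply[where sV=sV and Z=Z and f=l and g=psi3 and k=k0] sum0 by simp
  moreover have "(\<Sum>T\<in>Z. sV (l T) (psi3 T k0)) = sV (l T0) (psi3 T0 k0) + (\<Sum>T\<in>Z - {T0}. sV (l T) (psi3 T k0))"
  proof -
    have "T0 \<in> Z" using T0 by (simp add: NZ_def)
    then show ?thesis using sum.remove[OF finZ, of T0 "\<lambda>T. sV (l T) (psi3 T k0)"] by simp
  qed
  ultimately have eq: "sV (l T0) (psi3 T0 k0) = - (\<Sum>T\<in>Z - {T0}. sV (l T) (psi3 T k0))"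
    by (simp add: eq_neg_iff_add_eq_0)
  have "(\<Sum>T\<in>Z - {T0}. sV (l T) (psi3 T k0)) \<in> Sp" unfolding Sp_def
    using rest[unfolded Sp_def] by (intro span_sum) auto
  then have inSp: "sV (l T0) (psi3 T0 k0) \<in> Sp" unfolding Sp_def using eq span_neg by simp
  obtain c0 where c0: "c0 \<noteq> 0" "psi3 T0 k0 = sV c0 (pv S0)" using psi3_in[OF cT0 k0T0(1)] T0k0 by auto
  have lT0: "l T0 \<noteq> 0" using T0 by (simp add: NZ_def)
  have "sV (l T0 * c0) (pv S0) \<in> Sp" using inSp c0 by simp
  then have "sV (inverse (l T0 * c0)) (sV (l T0 * c0) (pv S0)) \<in> Sp" unfolding Sp_def by (rule span_scale)
  moreover have "inverse (l T0 * c0) * (l T0 * c0) = 1" using lT0 c0 by (intro left_inverse) simp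
  ultimately have pvS0: "pv S0 \<in> Sp" by (simp only: scale_scale scale_one)
  have "pv ` {S\<in>B. Ylt S S0} \<subseteq> pv ` B - {pv S0}"
    using B_props(3) S0 Ylt_irrefl by (auto simp: inj_on_def)
  then have "pv S0 \<in> span (pv ` B - {pv S0})" using pvS0 unfolding Sp_def by (meson span_mono subsetD)
  then have "dependent (pv ` B)" unfolding dependent_def using S0 by blast
  then show False using B_props(2) by simp
qed

end



context setting
begin

lemma psi3_inj: "inj_on psi3 WW"
proof (rule inj_onI, rule ccontr)
  fix T1 T2 assume T: "T1 \<in> WW" "T2 \<in> WW" "psi3 T1 = psi3 T2" "T1 \<noteq> T2"
  define l where "l = (\<lambda>T. if T = T1 then (1::'a) else -1)"
  have "(\<Sum>T\<in>{T1,T2}. tscale sV (l T) (psi3 T)) = tscale sV 1 (psi3 T1) + tscale sV (-1) (psi3 T2)"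
    using T(4) by (simp add: l_def)
  also have "\<dots> = 0" using T(3) by (simp add: tscale_def fun_eq_iff)
  finally have "\<forall>T\<in>{T1,T2}. l T = 0" using T(1,2) by (intro psi_indep) auto
  then show False by (simp add: l_def)
qed

lemma psi3_indep: "T.independent (psi3 ` WW)"
proof (rule T.independent_if_scalars_zero)
  show "finite (psi3 ` WW)" using finite_Wset by simp
  fix f x assume s: "(\<Sum>x\<in>psi3 ` WW. tscale sV (f x) x) = 0" and x: "x \<in> psi3 ` WW"
  have "(\<Sum>T\<in>WW. tscale sV ((f \<circ> psi3) T) (psi3 T)) = 0"
    using s sum.reindex[OF psi3_inj, of "\<lambda>x. tscale sV (f x) x"] by simp
  then have "\<forall>T\<in>WW. (f \<circ> psi3) T = 0" by (intro psi_indep) auto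
  then show "f x = 0" using x by auto
qed

definition GG where "GG = {Psi_basis A u a b c | a b c. a \<in> {1..n} \<and> b \<in> {1..n} \<and> c \<in> {1..n}}"

lemma GG_finite: "finite GG"
proof -
  have "GG \<subseteq> (\<lambda>(a,b,c). Psi_basis A u a b c) ` ({1..n} \<times> {1..n} \<times> {1..n})"
  proof
    fix v assume "v \<in> GG"
    then obtain a b c where "v = Psi_basis A u a b c" "a \<in> {1..n}" "b \<in> {1..n}" "c \<in> {1..n}"
      unfolding GG_def by blast
    then show "v \<in> (\<lambda>(a,b,c). Psi_basis A u a b c) ` ({1..n} \<times> {1..n} \<times> {1..n})"
      by (intro image_eqI[of _ _ "(a,b,c)"]) auto
  qed
  then show ?thesis by (rule finite_subset) simp
qed

lemma psi3_GG: "psi3 ` WW \<subseteq> GG"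
proof
  fix v assume "v \<in> psi3 ` WW"
  then obtain X where X: "X \<in> WW" "v = psi3 X" by blast
  then have cX: "card X = 3" and Xs: "X \<subseteq> {1..n}" by (auto simp: Wset_def)
  obtain x y z where xyz: "x < y" "y < z" "X = {x,y,z}" using three_sorted[OF cX] by blast
  have "v = Psi_basis A u x y z" using X psi3_eq[OF xyz(1,2)] xyz(3) by simp
  moreover have "x \<in> {1..n}" "y \<in> {1..n}" "z \<in> {1..n}" using Xs xyz by auto
  ultimately show "v \<in> GG" unfolding GG_def by blast
qed

lemma card_W_le_dim: "card WW \<le> T.dim (T.span GG)"
proof -
  obtain Bb where Bb: "Bb \<subseteq> T.span GG" "T.independent Bb" "T.span GG \<subseteq> T.span Bb" "card Bb = T.dim (T.span GG)"
    using T.basis_exists[of "T.span GG"] by blast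
  have fBb: "finite Bb" using T.independent_span_bound[OF GG_finite Bb(2) Bb(1)] by blast
  have "psi3 ` WW \<subseteq> T.span Bb" using psi3_GG Bb(3) T.span_superset by blast
  then have "card (psi3 ` WW) \<le> card Bb" using T.independent_span_bound[OF fBb psi3_indep] by blast
  then show ?thesis using Bb(4) card_image[OF psi3_inj] by simp
qed

end

theorem proposition2p9:
  fixes sU :: "'a::field \<Rightarrow> 'u::ab_group_add \<Rightarrow> 'u"
    and sV :: "'a \<Rightarrow> 'v::ab_group_add \<Rightarrow> 'v"
    and A :: "'u \<Rightarrow> 'u \<Rightarrow> 'v"
    and u :: "nat \<Rightarrow> 'u"
    and n m :: nat
  assumes "vector_space sU" and "vector_space sV"
    and "inj_on u {1..n}"
    and "\<not> module.dependent sU (u ` {1..n})"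
    and "module.span sU (u ` {1..n}) = UNIV"
    and "\<exists>BV. finite BV \<and> module.span sV BV = UNIV"
    and "vector_space.dim sV (UNIV :: 'v set) = m"
    and "alt_bilinear sU sV A"
    and "module.span sV (range (\<lambda>(x, y). A x y)) = UNIV"
    and "\<not> tree_height_one (Bset sV A u n)"
  shows "int (card (Wset n (Bset sV A u n))) \<ge> (\<Sum>i=2..m+1. int n - int i) + (int m - 2)
       \<and> int (vector_space.dim (tscale sV) (Im_Psi sV A u n)) \<ge> (\<Sum>i=2..m+1. int n - int i) + (int m - 2)"
proof -
  interpret S: setting sV A u n sU
    unfolding setting_def setting_axioms_def gr_def using assms by auto
  have BB: "Bset sV A u n = S.B" by (simp add: Bset_def)
  have ns: "\<not> (\<exists>i. \<forall>S\<in>S.B. i \<in> S)" using assms(10) BB by (simp add: tree_height_one_def)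
  have "FF n S.B \<ge> int (card S.B) - 2"
    using comb_main[OF S.B_props(1) S.B_props(6) ns] .
  moreover have cB: "card S.B = m" using S.B_props(4) assms(7) by simp
  ultimately have "int (card (Wset n S.B)) - sb n m \<ge> int m - 2" by (simp add: FF_def)
  then have c1: "int (card (Wset n S.B)) \<ge> (\<Sum>i=2..m+1. int n - int i) + (int m - 2)"
    unfolding sb_def by linarith
  have "card (Wset n S.B) \<le> vector_space.dim (tscale sV) (Im_Psi sV A u n)"
    using S.card_W_le_dim by (simp add: Im_Psi_def S.GG_def)
  then show ?thesis using c1 BB by simp
qed

end
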